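(* Let $p>2$ be a prime and $g$ a primitive root modulo $p$. Let $a\ge 0$, $r>0$, $N>0$ be integers such that $\mathcal{J}=\{a+r,a+2r,\dots,a+Nr\}\subset[1,p-1]$, and let $$\mathcal{M}(g)=\Big\{\frac{\log_g(a+jr)}{p-1}\colon 1\le j\le N\Big\}\subset[0,1).$$ There exist absolute constants $c_1,c_2>0$ (independent of $p,g,a,r,N,\alpha,\beta$) such that: (i) for any $0\le\alpha\le\beta\le1$ with $\frac1\pi<p(\beta-\alpha)$, $$\big|\mathcal{D}(\mathcal{M}(g);\alpha,\beta)\big|\le c_1\,p^{1/2}\log p\,\big(2+\log(p(\beta-\alpha))\big);$$ (ii) $$\big|\mathcal{D}(\mathcal{M}(g))\big|\le \frac{c_2}{\operatorname{card}(\mathcal{M}(g))}\,p^{1/2}\log^2 p.$$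
   Context: For $x$ coprime to $p$, the discrete logarithm $\log_g x$ is the smallest integer $n\ge 0$ with $g^n\equiv x\pmod p$ (so $0\le \log_g x\le p-2$). For $0\le\alpha\le\beta\le 1$, the discrepancy is $\mathcal{D}(\mathcal{M}(g);\alpha,\beta)=\operatorname{card}(\mathcal{M}(g)\cap[\alpha,\beta])-(\beta-\alpha)\operatorname{card}(\mathcal{M}(g))$, and the extreme discrepancy is $\mathcal{D}(\mathcal{M}(g))=\frac{1}{\operatorname{card}(\mathcal{M}(g))}\sup_{0\le\alpha\le\beta\le1}|\mathcal{D}(\mathcal{M}(g);\alpha,\beta)|$. $\log$ without subscript denotes the natural logarithm. *)

theory Defs
  imports "HOL-Analysis.Analysis" "HOL-Number_Theory.Number_Theory"
begin

definition dlog :: "nat \<Rightarrow> nat \<Rightarrow> nat \<Rightarrow> nat" where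
  "dlog p g x = (LEAST n::nat. [g ^ n = x] (mod p))"

definition Mset :: "nat \<Rightarrow> nat \<Rightarrow> nat \<Rightarrow> nat \<Rightarrow> nat \<Rightarrow> real set" where
  "Mset p g a r N = (\<lambda>j. real (dlog p g (a + j * r)) / real (p - 1)) ` {1..N}"

definition disc :: "real set \<Rightarrow> real \<Rightarrow> real \<Rightarrow> real" where
  "disc M \<alpha> \<beta> = real (card (M \<inter> {\<alpha>..\<beta>})) - (\<beta> - \<alpha>) * real (card M)"

definition ext_disc :: "real set \<Rightarrow> real" where
  "ext_disc M = (1 / real (card M)) *
     (SUP ab \<in> {(\<alpha>, \<beta>). 0 \<le> \<alpha> \<and> \<alpha> \<le> \<beta> \<and> \<beta> \<le> 1}. \<bar>disc M (fst ab) (snd ab)\<bar>)"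

end

theory Submission
  imports Defs
begin


definition ee :: "nat \<Rightarrow> int \<Rightarrow> complex" where
  "ee n x = cis (2 * pi * of_int x / of_nat n)"

lemma ee_add: "ee n (x + y) = ee n x * ee n y"
  unfolding ee_def by (simp add: cis_mult add_divide_distrib distrib_left)

lemma ee_0 [simp]: "ee n 0 = 1"
  unfolding ee_def by simp

lemma norm_ee [simp]: "norm (ee n x) = 1"
  unfolding ee_def by simp

lemma ee_neg: "ee n (- x) = cnj (ee n x)"
  unfolding ee_def by (simp add: cis_cnj)

lemma ee_mult_neg: "ee n x * ee n (- x) = 1"
  by (metis add.right_inverse ee_0 ee_add)

lemma cis_eq_1_iff': "cis t = 1 \<longleftrightarrow> (\<exists>n::int. t = of_int n * (2 * pi))"
  unfolding cis_conv_exp exp_eq_1 by (auto simp: algebra_simps)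

lemma ee_multiple: "n > 0 \<Longrightarrow> ee n (int n * y) = 1"
proof -
  assume "n > 0"
  then have "2 * pi * of_int (int n * y) / of_nat n = of_int y * (2 * pi)" by simp
  then show ?thesis unfolding ee_def by (simp add: cis_eq_1_iff')
qed

lemma ee_eq_1_iff: "n > 0 \<Longrightarrow> ee n x = 1 \<longleftrightarrow> int n dvd x"
proof
  assume n: "n > 0" and "ee n x = 1"
  then obtain m where m: "2 * pi * of_int x / of_nat n = of_int m * (2 * pi)"
    unfolding ee_def cis_eq_1_iff' by blast
  then have "real_of_int x = of_int m * of_nat n" using n by (simp add: field_simps)
  then have "x = m * int n" by (metis of_int_eq_iff of_int_mult of_int_of_nat_eq)
  then show "int n dvd x" by simp
next
  assume "n > 0" "int n dvd x"
  then show "ee n x = 1" using ee_multiple by (auto elim!: dvdE)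
qed

lemma ee_cong: "n > 0 \<Longrightarrow> [x = y] (mod int n) \<Longrightarrow> ee n x = ee n y"
proof -
  assume n: "n > 0" and c: "[x = y] (mod int n)"
  then obtain k where "x = y + int n * k"
    by (metis cong_iff_lin cong_sym)
  then show ?thesis using ee_add ee_multiple[OF n] by simp
qed

lemma ee_mod: "n > 0 \<Longrightarrow> ee n (x mod int n) = ee n x"
  by (intro ee_cong) (auto simp: cong_def)

lemma ee_power: "ee n x ^ m = ee n (int m * x)"
  by (induction m) (auto simp: ee_add algebra_simps)

lemma geo_zero:
  assumes n: "n > 0" and nd: "\<not> int n dvd d"
  shows "(\<Sum>k<n. ee n (int k * d)) = 0"
proof -
  have z: "ee n d \<noteq> 1" using ee_eq_1_iff[OF n] nd by simp
  have "(\<Sum>k<n. ee n (int k * d)) = (\<Sum>k<n. ee n d ^ k)" by (simp add: ee_power)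
  also have "\<dots> = (ee n d ^ n - 1) / (ee n d - 1)" using z by (rule geometric_sum)
  also have "ee n d ^ n = 1" using ee_power ee_multiple[OF n] by simp
  finally show ?thesis by simp
qed

lemma geo_bound:
  fixes z :: complex
  assumes "norm z = 1" "z \<noteq> 1"
  shows "norm (\<Sum>i<L. z ^ i) \<le> 2 / norm (z - 1)"
proof -
  have "(\<Sum>i<L. z ^ i) = (z ^ L - 1) / (z - 1)" using assms(2) by (rule geometric_sum)
  moreover have "norm (z ^ L - 1) \<le> 2"
    using norm_triangle_ineq4[of "z ^ L" 1] assms by (simp add: norm_power)
  ultimately show ?thesis using assms
    by (simp add: norm_divide divide_right_mono)
qed

lemma sin_half_bound:
  assumes "0 \<le> y" "y \<le> pi / 2"
  shows "y / 2 \<le> sin y"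
proof -
  have "\<bar>sin y - (\<Sum>m<3. sin_coeff m * y ^ m)\<bar> \<le> inverse (fact 3) * \<bar>y\<bar> ^ 3"
    by (rule Maclaurin_sin_bound)
  moreover have "(\<Sum>m<3. sin_coeff m * y ^ m) = y"
    by (simp add: sin_coeff_def eval_nat_numeral)
  ultimately have h: "y - y ^ 3 / 6 \<le> sin y" using assms
    by (simp add: eval_nat_numeral abs_if split: if_splits)
  have "pi \<le> 32/10" using pi_approx by simp
  then have "y \<le> 16/10" using assms by linarith
  then have "y * y \<le> (16/10) * (16/10)" using assms by (intro mult_mono) auto
  then have "y * y \<le> 3" by simp
  then have "y * (y * y) \<le> y * 3" using assms by (intro mult_left_mono) auto
  then have "y ^ 3 / 6 \<le> y / 2" by (simp add: power3_eq_cube)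
  then show ?thesis using h by linarith
qed

lemma norm_cis_minus_1: "norm (cis (2 * t) - 1) = 2 * \<bar>sin t\<bar>"
proof -
  have "cis (2 * t) - 1 = cis t * (cis t - cis (- t))"
    by (simp add: algebra_simps cis_mult flip: mult_2)
  moreover have "cis t - cis (- t) = Complex 0 (2 * sin t)"
    by (simp add: complex_eq_iff)
  ultimately have "norm (cis (2 * t) - 1) = norm (cis t) * norm (Complex 0 (2 * sin t))"
    by (simp only: norm_mult)
  also have "\<dots> = norm (Complex 0 (2 * sin t))" by simp
  also have "norm (Complex 0 (2 * sin t)) = sqrt ((2 * sin t)^2)" by (simp add: cmod_def)
  also have "\<dots> = \<bar>2 * sin t\<bar>" by (rule real_sqrt_abs)
  finally show ?thesis by simp
qed

lemma norm_ee_minus_1: "norm (ee n x - 1) = 2 * \<bar>sin (pi * of_int x / of_nat n)\<bar>"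
proof -
  have "ee n x = cis (2 * (pi * of_int x / of_nat n))" unfolding ee_def by (simp add: mult.assoc)
  then show ?thesis by (simp only: norm_cis_minus_1)
qed

lemma inv_helper: "(t::real) \<le> X \<Longrightarrow> 0 < t \<Longrightarrow> 1 / X \<le> 1 / t"
  by (simp add: frac_le)

lemma inv_bound:
  assumes "0 < c" "c < n"
  shows "1 / norm (ee n (int c) - 1) \<le> real n / real c + real n / real (n - c)"
proof -
  have n: "real n > 0" using assms by simp
  have pos1: "real n / real c \<ge> 0" "real n / real (n - c) \<ge> 0" by auto
  show ?thesis
  proof (cases "2 * c \<le> n")
    case True
    let ?y = "pi * real c / real n"
    have y0: "0 \<le> ?y" by simp
    have h2: "?y \<le> pi / 2" using True n by (simp add: field_simps)
    have "?y / 2 \<le> sin ?y" using y0 h2 by (rule sin_half_bound)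
    then have "norm (ee n (int c) - 1) \<ge> ?y" by (simp add: norm_ee_minus_1)
    moreover have "?y \<ge> real c / real n" using n pi_gt3 
      by (intro divide_right_mono) (auto simp: mult_le_cancel_right1 less_imp_le)
    ultimately have X: "norm (ee n (int c) - 1) \<ge> real c / real n" by linarith
    have cp: "real c / real n > 0" using assms by simp
    have "1 / norm (ee n (int c) - 1) \<le> 1 / (real c / real n)"
      by (rule inv_helper[OF X cp])
    moreover have "1 / (real c / real n) = real n / real c" by simp
    ultimately have h: "1 / norm (ee n (int c) - 1) \<le> real n / real c" by simp
    show ?thesis by (rule add_increasing2[OF pos1(2) h])
  next
    case False
    let ?y = "pi * real (n - c) / real n"
    have y0: "0 \<le> ?y" by simp
    have h2: "?y \<le> pi / 2" using False n by (simp add: field_simps of_nat_diff assms(2) less_imp_le)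
    have "?y / 2 \<le> sin ?y" using y0 h2 by (rule sin_half_bound)
    moreover have "sin ?y = sin (pi * of_int (int c) / of_nat n)"
    proof -
      have "?y = pi - pi * real c / real n" using n assms by (simp add: of_nat_diff field_simps)
      then show ?thesis by simp
    qed
    ultimately have "norm (ee n (int c) - 1) \<ge> ?y" by (simp add: norm_ee_minus_1)
    moreover have "?y \<ge> real (n - c) / real n" using n pi_gt3 
      by (intro divide_right_mono) (auto simp: mult_le_cancel_right1 less_imp_le)
    ultimately have X: "norm (ee n (int c) - 1) \<ge> real (n - c) / real n" by linarith
    have cp: "real (n - c) / real n > 0" using assms by simp
    have "1 / norm (ee n (int c) - 1) \<le> 1 / (real (n - c) / real n)"
      by (rule inv_helper[OF X cp])
    moreover have "1 / (real (n - c) / real n) = real n / real (n - c)" by simp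
    ultimately have h: "1 / norm (ee n (int c) - 1) \<le> real n / real (n - c)" by simp
    show ?thesis by (rule add_increasing[OF pos1(1) h])
  qed
qed

lemma harm_le_1_ln: "n > 0 \<Longrightarrow> harm n \<le> 1 + ln (real n)"
  using euler_mascheroni_sequence_decreasing[of 1 n] by (simp add: harm_def)

lemma sum_inv_bound:
  assumes "n \<ge> 2"
  shows "(\<Sum>c\<in>{1..<n}. 2 / norm (ee n (int c) - 1)) \<le> 4 * real n * (1 + ln (real n))"
proof -
  have "(\<Sum>c\<in>{1..<n}. 2 / norm (ee n (int c) - 1))
        \<le> (\<Sum>c\<in>{1..<n}. 2 * (real n / real c) + 2 * (real n / real (n - c)))"
  proof (intro sum_mono)
    fix c assume c: "c \<in> {1..<n}"
    then have h: "1 / norm (ee n (int c) - 1) \<le> real n / real c + real n / real (n - c)"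
      by (intro inv_bound) auto
    have "2 / norm (ee n (int c) - 1) = 2 * (1 / norm (ee n (int c) - 1))" by simp
    moreover have "2 * (1 / norm (ee n (int c) - 1)) \<le> 2 * (real n / real c + real n / real (n - c))"
      using h by simp
    ultimately show "2 / norm (ee n (int c) - 1) \<le> 2 * (real n / real c) + 2 * (real n / real (n - c))"
      by (simp only: distrib_left)
  qed
  also have "\<dots> = 2 * (\<Sum>c\<in>{1..<n}. real n / real c) + 2 * (\<Sum>c\<in>{1..<n}. real n / real (n - c))"
    by (simp add: sum.distrib sum_distrib_left)
  also have "(\<Sum>c\<in>{1..<n}. real n / real (n - c)) = (\<Sum>c\<in>{1..<n}. real n / real c)"
  proof -
    have "(\<Sum>c\<in>{1..<n}. real n / real c) = (\<Sum>c\<in>{1..<n}. real n / real (n + 1 - Suc c))"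
      by (rule sum.atLeastLessThan_rev)
    then have "(\<Sum>c\<in>{1..<n}. real n / real (n - c)) = (\<Sum>c\<in>{1..<n}. real n / real c)"
      by simp
    then show ?thesis .
  qed
  also have "(\<Sum>c\<in>{1..<n}. real n / real c) = real n * harm (n - 1)"
  proof -
    have "{1..<n} = {1..n-1}" using assms by auto
    then show ?thesis by (simp add: harm_def sum_distrib_left divide_inverse)
  qed
  finally have A: "(\<Sum>c\<in>{1..<n}. 2 / norm (ee n (int c) - 1)) \<le> 2 * (real n * harm (n - 1)) + 2 * (real n * harm (n - 1))" .
  have H: "harm (n - 1) \<le> 1 + ln (real n)"
  proof -
    have "harm (n - 1) \<le> 1 + ln (real (n - 1))" using assms by (intro harm_le_1_ln) auto
    also have "ln (real (n - 1)) \<le> ln (real n)" using assms by (subst ln_le_cancel_iff) auto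
    finally show ?thesis by simp
  qed
  have "real n * harm (n - 1) \<le> real n * (1 + ln (real n))" using H by (intro mult_left_mono) auto
  then show ?thesis using A by linarith
qed



lemma sum_shift_periodic:
  fixes F :: "nat \<Rightarrow> 'a::ab_group_add"
  assumes per: "\<And>w. F (w + q) = F w"
  shows "(\<Sum>u<q. F (u + v)) = (\<Sum>u<q. F u)"
proof (induction v)
  case 0 then show ?case by simp
next
  case (Suc v)
  define G where "G u = F (u + v)" for u
  have "(\<Sum>u<Suc q. G u) = G 0 + (\<Sum>u<q. G (Suc u))" by (rule sum.lessThan_Suc_shift)
  moreover have "(\<Sum>u<Suc q. G u) = (\<Sum>u<q. G u) + G q" by simp
  moreover have "G q = G 0" unfolding G_def using per[of v] by (simp add: add.commute)
  ultimately have "G 0 + (\<Sum>u<q. G (Suc u)) = G 0 + (\<Sum>u<q. G u)"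
    by (simp only: add.commute)
  then have "(\<Sum>u<q. G (Suc u)) = (\<Sum>u<q. G u)" by simp
  then show ?case using Suc unfolding G_def by simp
qed

locale proot =
  fixes p g :: nat
  assumes prime: "prime p" and p2: "p > 2" and pr: "residue_primroot p g"
begin

definition q where "q = p - 1"

lemma q_ge2: "q \<ge> 2" using p2 by (simp add: q_def)
lemma q_pos: "q > 0" using q_ge2 by simp
lemma p_pos: "p > 0" using p2 by simp

lemma gen: "bij_betw (\<lambda>i. g ^ i mod p) {..<q} {0<..<p}"
proof -
  have "bij_betw (\<lambda>i. g ^ i mod p) {..<totient p} (totatives p)"
    using p2 pr by (intro residue_primroot_is_generator) auto
  then show ?thesis using prime by (simp add: totient_prime totatives_prime q_def)
qed

lemma g_not_dvd: "\<not> p dvd g"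
proof
  assume "p dvd g"
  moreover have "coprime p g" using pr by (simp add: residue_primroot_def)
  ultimately have "p dvd 1" by (meson coprime_common_divisor dvd_refl)
  then show False using p2 by simp
qed

lemma g_pos: "g > 0" using g_not_dvd by (cases g) auto

lemma gq: "[g ^ q = 1] (mod p)"
  unfolding q_def using fermat_theorem[OF prime g_not_dvd] .

lemma gpow_add_q: "[g ^ (w + q) = g ^ w] (mod p)"
proof -
  have "[g ^ w * g ^ q = g ^ w * 1] (mod p)" using gq by (intro cong_mult) auto
  then show ?thesis by (simp add: power_add)
qed

lemma gpow_inj: "i < q \<Longrightarrow> j < q \<Longrightarrow> [g ^ i = g ^ j] (mod p) \<Longrightarrow> i = j"
  using gen unfolding bij_betw_def inj_on_def cong_def by auto

lemma not_dvd_gpow: "\<not> p dvd g ^ i"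
  using g_not_dvd prime_dvd_power[OF prime] by blast

lemma mult_bij:
  assumes m: "\<not> p dvd m"
  shows "bij_betw (\<lambda>i. g ^ i * m mod p) {..<q} {0<..<p}"
proof -
  have cop: "coprime m p" using m prime by (metis prime_imp_coprime coprime_commute)
  have inj: "inj_on (\<lambda>i. g ^ i * m mod p) {..<q}"
  proof (rule inj_onI)
    fix i j assume i: "i \<in> {..<q}" and j: "j \<in> {..<q}" and e: "g ^ i * m mod p = g ^ j * m mod p"
    then have "[g ^ i * m = g ^ j * m] (mod p)" by (simp add: cong_def)
    then have "[g ^ i = g ^ j] (mod p)" using cong_mult_rcancel_nat[OF cop] by simp
    then show "i = j" using i j gpow_inj by auto
  qed
  have sub: "(\<lambda>i. g ^ i * m mod p) ` {..<q} \<subseteq> {0<..<p}"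
  proof
    fix x assume "x \<in> (\<lambda>i. g ^ i * m mod p) ` {..<q}"
    then obtain i where x: "x = g ^ i * m mod p" by auto
    have "\<not> p dvd g ^ i * m" using not_dvd_gpow m prime by (simp add: prime_dvd_mult_iff)
    then have "x \<noteq> 0" using x by (simp add: dvd_eq_mod_eq_0)
    moreover have "x < p" using x p_pos by simp
    ultimately show "x \<in> {0<..<p}" by simp
  qed
  have "card ((\<lambda>i. g ^ i * m mod p) ` {..<q}) = card {0<..<p}"
    using inj by (simp add: card_image q_def)
  then have "(\<lambda>i. g ^ i * m mod p) ` {..<q} = {0<..<p}"
    using sub by (intro card_subset_eq) auto
  then show ?thesis using inj by (simp add: bij_betw_def)
qed

lemma ee_p_mod: "ee p (int (x mod p)) = ee p (int x)"
  using ee_mod[OF p_pos] by (simp add: zmod_int)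

lemma sum_ee_units: "(\<Sum>c\<in>{0<..<p}. ee p (int c)) = -1"
proof -
  have "(\<Sum>c<p. ee p (int c * 1)) = 0"
    using p2 by (intro geo_zero) auto
  moreover have "{..<p} = insert 0 {0<..<p}" using p_pos by auto
  ultimately have "1 + (\<Sum>c\<in>{0<..<p}. ee p (int c)) = 0" by simp
  then show ?thesis by (simp add: add_eq_0_iff)
qed

lemma sum_over_mult_bij:
  assumes "\<not> p dvd m"
  shows "(\<Sum>i<q. f (g ^ i * m mod p)) = (\<Sum>c\<in>{0<..<p}. f c)"
  using sum.reindex_bij_betw[OF mult_bij[OF assms], of f] by simp

definition F :: "nat \<Rightarrow> nat \<Rightarrow> complex" where
  "F k w = ee q (- (int k * int w)) * ee p (int (g ^ w))"

definition tau :: "nat \<Rightarrow> complex" where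
  "tau k = (\<Sum>w<q. F k w)"

lemma F_per: "F k (w + q) = F k w"
proof -
  have "ee q (- (int k * int (w + q))) = ee q (- (int k * int w) + int q * (- int k))"
    by (simp add: algebra_simps)
  also have "\<dots> = ee q (- (int k * int w))" by (simp only: ee_add ee_multiple[OF q_pos] mult_1_right)
  finally have 1: "ee q (- (int k * int (w + q))) = ee q (- (int k * int w))" .
  have "[int (g ^ (w + q)) = int (g ^ w)] (mod int p)"
    using gpow_add_q[of w] by (simp only: cong_int_iff)
  then have 2: "ee p (int (g ^ (w + q))) = ee p (int (g ^ w))"
    by (intro ee_cong p_pos)
  show ?thesis unfolding F_def using 1 2 by simp
qed

lemma gauss_identity:
  assumes v: "[g ^ v = x] (mod p)"
  shows "(\<Sum>u<q. ee q (- (int k * int u)) * ee p (int (g ^ u * x))) = ee q (int k * int v) * tau k"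
proof -
  have "ee q (- (int k * int u)) * ee p (int (g ^ u * x)) = ee q (int k * int v) * F k (u + v)" for u
  proof -
    have "[g ^ u * g ^ v = g ^ u * x] (mod p)" using v by (intro cong_mult) auto
    then have "[g ^ (u + v) = g ^ u * x] (mod p)" by (simp add: power_add)
    then have "[int (g ^ (u + v)) = int (g ^ u * x)] (mod int p)"
      by (simp only: cong_int_iff)
    then have 1: "ee p (int (g ^ u * x)) = ee p (int (g ^ (u + v)))"
      by (intro ee_cong[OF p_pos]) (simp add: cong_sym)
    have "ee q (- (int k * int u)) = ee q (int k * int v + - (int k * int (u + v)))"
      by (simp add: algebra_simps)
    then have 2: "ee q (- (int k * int u)) = ee q (int k * int v) * ee q (- (int k * int (u + v)))"
      by (simp only: ee_add)
    show ?thesis unfolding F_def 1 2 by simp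
  qed
  then have "(\<Sum>u<q. ee q (- (int k * int u)) * ee p (int (g ^ u * x)))
      = ee q (int k * int v) * (\<Sum>u<q. F k (u + v))"
    by (simp add: sum_distrib_left)
  also have "(\<Sum>u<q. F k (u + v)) = tau k"
    unfolding tau_def by (rule sum_shift_periodic) (rule F_per)
  finally show ?thesis .
qed

lemma cnj_mult_rearr: "cnj (a * b) * (c * d) = (cnj a * c) * (cnj b * (d::complex))"
  by (simp add: algebra_simps)

lemma int_mult_diff: "(1::nat) \<le> B \<Longrightarrow> int (A * B) - int A = int (A * (B - 1))"
  by (simp add: of_nat_diff algebra_simps)

lemma int_arith1: "- (int k * int (s + w)) - - (int k * int w) = - (int k * int s)"
  by (simp add: algebra_simps)

lemma cnj_ee_mult: "cnj (ee n x) * ee n y = ee n (y - x)"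
  by (simp add: ee_neg[symmetric] ee_add[symmetric])

lemma inner_sum:
  assumes s: "s < q"
  shows "(\<Sum>w<q. ee p (int (g ^ w * (g ^ s - 1)))) = (if s = 0 then of_nat q else -1)"
proof (cases "s = 0")
  case True then show ?thesis by simp
next
  case False
  have nd: "\<not> p dvd (g ^ s - 1)"
  proof
    assume "p dvd (g ^ s - 1)"
    moreover have "g ^ s \<ge> 1" using g_pos by simp
    ultimately have "[g ^ s = 1] (mod p)" by (simp add: cong_altdef_nat)
    then have "[g ^ s = g ^ 0] (mod p)" by simp
    then show False using gpow_inj[of s 0] s q_pos False by simp
  qed
  have "(\<Sum>w<q. ee p (int (g ^ w * (g ^ s - 1)))) = (\<Sum>w<q. ee p (int (g ^ w * (g ^ s - 1) mod p)))"
    by (simp only: ee_p_mod)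
  also have "\<dots> = (\<Sum>c\<in>{0<..<p}. ee p (int c))"
    by (rule sum_over_mult_bij[OF nd])
  also have "\<dots> = -1" by (rule sum_ee_units)
  finally show ?thesis using False by simp
qed

lemma tau_norm_sq:
  assumes k: "0 < k" "k < q"
  shows "tau k * cnj (tau k) = of_nat p"
proof -
  have prod: "cnj (F k w) * F k (s + w) = ee q (- (int k * int s)) * ee p (int (g ^ w * (g ^ s - 1)))" for s w
  proof -
    have "cnj (F k w) * F k (s + w) =
        (cnj (ee q (- (int k * int w))) * ee q (- (int k * int (s + w)))) *
        (cnj (ee p (int (g ^ w))) * ee p (int (g ^ (s + w))))"
      unfolding F_def by (rule cnj_mult_rearr)
    also have "\<dots> = ee q (- (int k * int (s + w)) - - (int k * int w)) *
                     ee p (int (g ^ (s + w)) - int (g ^ w))"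
      by (simp only: cnj_ee_mult)
    also have "- (int k * int (s + w)) - - (int k * int w) = - (int k * int s)"
      by (rule int_arith1)
    also have "int (g ^ (s + w)) - int (g ^ w) = int (g ^ w * (g ^ s - 1))"
    proof -
      have "g ^ s \<ge> 1" using g_pos by simp
      then have "int (g ^ w * g ^ s) - int (g ^ w) = int (g ^ w * (g ^ s - 1))"
        by (rule int_mult_diff)
      moreover have "g ^ (s + w) = g ^ w * g ^ s" by (simp add: power_add mult.commute)
      ultimately show ?thesis by simp
    qed
    finally show ?thesis .
  qed
  have "tau k * cnj (tau k) = (\<Sum>w<q. cnj (F k w) * (\<Sum>u<q. F k u))"
  proof -
    have "tau k * cnj (tau k) = cnj (tau k) * tau k" by (rule mult.commute)
    then show ?thesis unfolding tau_def cnj_sum sum_distrib_right .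
  qed
  also have "\<dots> = (\<Sum>w<q. cnj (F k w) * (\<Sum>s<q. F k (s + w)))"
    by (intro sum.cong refl) (simp only: sum_shift_periodic[of "F k" q, OF F_per])
  also have "\<dots> = (\<Sum>w<q. \<Sum>s<q. ee q (- (int k * int s)) * ee p (int (g ^ w * (g ^ s - 1))))"
    by (simp only: sum_distrib_left prod)
  also have "\<dots> = (\<Sum>s<q. ee q (- (int k * int s)) * (\<Sum>w<q. ee p (int (g ^ w * (g ^ s - 1)))))"
    unfolding sum_distrib_left by (rule sum.swap)
  also have "\<dots> = (\<Sum>s<q. ee q (- (int k * int s)) * (-1 + (if s = 0 then of_nat p else 0)))"
  proof (intro sum.cong refl)
    fix s assume "s \<in> {..<q}"
    then have J: "(\<Sum>w<q. ee p (int (g ^ w * (g ^ s - 1)))) = (if s = 0 then of_nat q else -1)"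
      by (intro inner_sum) auto
    have pq: "(of_nat p :: complex) = of_nat q + 1" using p_pos by (simp add: q_def of_nat_diff)
    show "ee q (- (int k * int s)) * (\<Sum>w<q. ee p (int (g ^ w * (g ^ s - 1)))) =
          ee q (- (int k * int s)) * (-1 + (if s = 0 then of_nat p else 0))"
      unfolding J pq by (cases "s = 0") simp_all
  qed
  also have "\<dots> = (\<Sum>s<q. - ee q (int s * (- int k)) + (if s = 0 then of_nat p else 0))"
  proof (intro sum.cong refl)
    fix s :: nat
    have e: "ee q (- (int k * int s)) = ee q (int s * (- int k))" by (rule arg_cong[where f="ee q"]) simp
    show "ee q (- (int k * int s)) * (-1 + (if s = 0 then of_nat p else 0)) =
          - ee q (int s * (- int k)) + (if s = 0 then of_nat p else 0)"
      unfolding e by (cases "s = 0") (simp_all add: distrib_left)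
  qed
  also have "\<dots> = - (\<Sum>s<q. ee q (int s * (- int k))) + (\<Sum>s<q. (if s = 0 then of_nat p else 0))"
    by (simp only: sum.distrib sum_negf)
  also have "(\<Sum>s<q. ee q (int s * (- int k))) = 0"
  proof (rule geo_zero[OF q_pos])
    show "\<not> int q dvd - int k"
    proof
      assume "int q dvd - int k"
      then have "q dvd k" by simp
      then show False using k by (auto dest: dvd_imp_le)
    qed
  qed
  also have "(\<Sum>s<q. (if s = 0 then (of_nat p :: complex) else 0)) = of_nat p"
    using q_pos by (simp add: sum.delta)
  finally show ?thesis by simp
qed

lemma norm_tau: "0 < k \<Longrightarrow> k < q \<Longrightarrow> norm (tau k) = sqrt (real p)"
proof -
  assume k: "0 < k" "k < q"
  have "complex_of_real ((norm (tau k))\<^sup>2) = of_nat p"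
    using tau_norm_sq[OF k] complex_norm_square[of "tau k"] by simp
  then have "(norm (tau k))\<^sup>2 = real p"
    by (metis of_real_eq_iff of_real_of_nat_eq)
  then show ?thesis by (metis norm_ge_zero real_sqrt_unique)
qed

end


locale pvsetup = proot +
  fixes a r N :: nat
  assumes rpos: "r > 0" and Npos: "N > 0"
    and range: "\<forall>j\<in>{1..N}. a + j * r \<in> {1..p - 1}"
begin

lemma dlog_prop:
  assumes x: "x \<in> {0<..<p}"
  shows "dlog p g x < q \<and> [g ^ dlog p g x = x] (mod p)"
proof -
  from x gen obtain i where i: "i < q" "g ^ i mod p = x"
    unfolding bij_betw_def by (metis (no_types, lifting) imageE lessThan_iff)
  have ix: "[g ^ i = x] (mod p)" using i x by (simp add: cong_def)
  then have "[g ^ dlog p g x = x] (mod p)" unfolding dlog_def by (rule LeastI)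
  moreover have "dlog p g x \<le> i" unfolding dlog_def using ix by (rule Least_le)
  ultimately show ?thesis using i by simp
qed

definition t :: "nat \<Rightarrow> nat" where "t j = dlog p g (a + j * r)"

lemma range': "j \<in> {1..N} \<Longrightarrow> a + j * r \<in> {0<..<p}"
  using range p_pos by fastforce

lemma t_lt: "j \<in> {1..N} \<Longrightarrow> t j < q"
  unfolding t_def using dlog_prop[OF range'] by blast

lemma t_cong: "j \<in> {1..N} \<Longrightarrow> [g ^ t j = a + j * r] (mod p)"
  unfolding t_def using dlog_prop[OF range'] by blast

lemma t_inj: "inj_on t {1..N}"
proof (rule inj_onI)
  fix i j assume i: "i \<in> {1..N}" and j: "j \<in> {1..N}" and e: "t i = t j"
  have "[a + i * r = a + j * r] (mod p)"
    using t_cong[OF i] t_cong[OF j] e by (metis cong_sym cong_trans)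
  then have "a + i * r = a + j * r"
    using range'[OF i] range'[OF j] by (simp add: cong_def)
  then show "i = j" using rpos by simp
qed

lemma r_not_dvd: "\<not> p dvd r"
proof
  assume "p dvd r"
  then have "r \<ge> p" using rpos by (simp add: dvd_imp_le)
  moreover have "(1::nat) \<in> {1..N}" using Npos by simp
  then have "a + 1 * r \<in> {1..p - 1}" using range by blast
  ultimately show False by auto
qed

definition S :: "nat \<Rightarrow> complex" where
  "S k = (\<Sum>j\<in>{1..N}. ee q (int k * int (t j)))"

lemma geo_1N:
  fixes z :: complex
  assumes "norm z = 1" "z \<noteq> 1"
  shows "norm (\<Sum>j\<in>{1..N}. z ^ j) \<le> 2 / norm (z - 1)"
proof -
  have "(\<Sum>j\<in>{1..N}. z ^ j) = z * (\<Sum>i<N. z ^ i)"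
    by (simp add: sum.atLeast1_atMost_eq sum_distrib_left)
  then have "norm (\<Sum>j\<in>{1..N}. z ^ j) = norm (\<Sum>i<N. z ^ i)"
    using assms by (simp add: norm_mult)
  also have "\<dots> \<le> 2 / norm (z - 1)" using assms by (rule geo_bound)
  finally show ?thesis .
qed

lemma inner_u_bound:
  "norm (\<Sum>j\<in>{1..N}. ee q (- (int k * int u)) * ee p (int (g ^ u * (a + j * r))))
     \<le> 2 / norm (ee p (int (g ^ u * r mod p)) - 1)"
proof -
  define z where "z = ee p (int (g ^ u * r mod p))"
  have zz: "ee p (int (g ^ u * r)) = z" unfolding z_def by (simp only: ee_p_mod)
  have trm: "ee p (int (g ^ u * (a + j * r))) = ee p (int (g ^ u * a)) * z ^ j" for j
  proof -
    have "int (g ^ u * (a + j * r)) = int (g ^ u * a) + int j * int (g ^ u * r)"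
      by (simp add: algebra_simps)
    then show ?thesis by (simp only: ee_add ee_power zz[symmetric])
  qed
  have "(\<Sum>j\<in>{1..N}. ee q (- (int k * int u)) * ee p (int (g ^ u * (a + j * r))))
      = (ee q (- (int k * int u)) * ee p (int (g ^ u * a))) * (\<Sum>j\<in>{1..N}. z ^ j)"
    by (simp only: trm sum_distrib_left mult.assoc)
  then have "norm (\<Sum>j\<in>{1..N}. ee q (- (int k * int u)) * ee p (int (g ^ u * (a + j * r))))
      = norm (\<Sum>j\<in>{1..N}. z ^ j)" by (simp add: norm_mult)
  also have "\<dots> \<le> 2 / norm (z - 1)"
  proof (rule geo_1N)
    show "norm z = 1" unfolding z_def by simp
    have "\<not> p dvd g ^ u * r" using not_dvd_gpow r_not_dvd prime by (simp add: prime_dvd_mult_iff)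
    then have c: "g ^ u * r mod p \<in> {0<..<p}" using p_pos by (simp add: dvd_eq_mod_eq_0)
    show "z \<noteq> 1"
    proof
      assume "z = 1"
      then have "int p dvd int (g ^ u * r mod p)" unfolding z_def using ee_eq_1_iff[OF p_pos] by simp
      then have "p dvd (g ^ u * r mod p)" by simp
      then show False using c by (auto dest: dvd_imp_le)
    qed
  qed
  finally show ?thesis unfolding z_def .
qed

lemma PV:
  assumes k: "0 < k" "k < q"
  shows "norm (S k) \<le> 4 * sqrt (real p) * (1 + ln (real p))"
proof -
  have "tau k * S k = (\<Sum>j\<in>{1..N}. ee q (int k * int (t j)) * tau k)"
    unfolding S_def by (simp add: sum_distrib_left mult.commute)
  also have "\<dots> = (\<Sum>j\<in>{1..N}. \<Sum>u<q. ee q (- (int k * int u)) * ee p (int (g ^ u * (a + j * r))))"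
  proof (intro sum.cong refl)
    fix j assume j: "j \<in> {1..N}"
    show "ee q (int k * int (t j)) * tau k =
      (\<Sum>u<q. ee q (- (int k * int u)) * ee p (int (g ^ u * (a + j * r))))"
      using gauss_identity[OF t_cong[OF j], of k] by (rule sym)
  qed
  also have "\<dots> = (\<Sum>u<q. \<Sum>j\<in>{1..N}. ee q (- (int k * int u)) * ee p (int (g ^ u * (a + j * r))))"
    by (rule sum.swap)
  finally have eq: "tau k * S k = \<dots>" .
  have "norm (tau k * S k) \<le> (\<Sum>u<q. 2 / norm (ee p (int (g ^ u * r mod p)) - 1))"
    unfolding eq by (rule order.trans[OF norm_sum sum_mono]) (rule inner_u_bound)
  also have "\<dots> = (\<Sum>c\<in>{0<..<p}. 2 / norm (ee p (int c) - 1))"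
    by (rule sum_over_mult_bij[OF r_not_dvd])
  also have "{0<..<p} = {1..<p}" by auto
  also have "(\<Sum>c\<in>{1..<p}. 2 / norm (ee p (int c) - 1)) \<le> 4 * real p * (1 + ln (real p))"
    using p2 by (intro sum_inv_bound) auto
  finally have A: "sqrt (real p) * norm (S k) \<le> 4 * real p * (1 + ln (real p))"
    by (simp add: norm_mult norm_tau[OF k])
  have sp: "sqrt (real p) > 0" using p_pos by simp
  have ss: "sqrt (real p) * sqrt (real p) = real p" by simp
  have "sqrt (real p) * (4 * sqrt (real p) * (1 + ln (real p))) = 4 * (sqrt (real p) * sqrt (real p)) * (1 + ln (real p))"
    by (simp only: ac_simps)
  then have "4 * real p * (1 + ln (real p)) = sqrt (real p) * (4 * sqrt (real p) * (1 + ln (real p)))"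
    unfolding ss by simp
  with A sp show ?thesis by (metis mult_le_cancel_left_pos)
qed

end


lemma geo_ivl:
  fixes z :: complex
  assumes "norm z = 1" "z \<noteq> 1"
  shows "norm (\<Sum>m\<in>{lo..<hi}. z ^ m) \<le> 2 / norm (z - 1)"
proof (cases "hi \<le> lo")
  case True then show ?thesis by simp
next
  case False
  have "(\<Sum>m\<in>{lo..<hi}. z ^ m) = (\<Sum>m\<in>{0 + lo..<(hi - lo) + lo}. z ^ m)" using False by simp
  also have "\<dots> = (\<Sum>i\<in>{0..<hi - lo}. z ^ (i + lo))" by (rule sum.shift_bounds_nat_ivl)
  also have "\<dots> = z ^ lo * (\<Sum>i<hi - lo. z ^ i)"
    by (simp add: power_add sum_distrib_left atLeast0LessThan mult.commute)
  finally have "norm (\<Sum>m\<in>{lo..<hi}. z ^ m) = norm (\<Sum>i<hi - lo. z ^ i)"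
    using assms by (simp add: norm_mult norm_power)
  also have "\<dots> \<le> 2 / norm (z - 1)" using assms by (rule geo_bound)
  finally show ?thesis .
qed

lemma ivl_mem:
  assumes q: "q > 0" and a: "0 \<le> \<alpha>" and b: "0 \<le> \<beta>" and m: "m < q"
  shows "(\<alpha> \<le> real m / real q \<and> real m / real q \<le> \<beta>) \<longleftrightarrow>
         (nat \<lceil>\<alpha> * real q\<rceil> \<le> m \<and> m < min q (nat \<lfloor>\<beta> * real q\<rfloor> + 1))"
proof -
  have qr: "real q > 0" using q by simp
  have 1: "\<alpha> \<le> real m / real q \<longleftrightarrow> \<alpha> * real q \<le> real m" using qr by (simp add: le_divide_eq)
  have 2: "real m / real q \<le> \<beta> \<longleftrightarrow> real m \<le> \<beta> * real q" using qr by (simp add: divide_le_eq)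
  have 3: "\<alpha> * real q \<le> real m \<longleftrightarrow> nat \<lceil>\<alpha> * real q\<rceil> \<le> m"
    by (metis ceiling_le_iff nat_le_iff of_int_of_nat_eq)
  have c0: "\<lfloor>\<beta> * real q\<rfloor> \<ge> 0" using b qr by simp
  have 4: "real m \<le> \<beta> * real q \<longleftrightarrow> m < nat \<lfloor>\<beta> * real q\<rfloor> + 1"
  proof -
    have "real m \<le> \<beta> * real q \<longleftrightarrow> int m \<le> \<lfloor>\<beta> * real q\<rfloor>" by (simp add: le_floor_iff)
    also have "\<dots> \<longleftrightarrow> m \<le> nat \<lfloor>\<beta> * real q\<rfloor>" using c0 by linarith
    finally show ?thesis by (simp add: less_Suc_eq_le)
  qed
  show ?thesis unfolding 1 2 3 4 using m by (simp add: min_def)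
qed

lemma ivl_card:
  assumes q: "q > 0" and ab: "0 \<le> \<alpha>" "\<alpha> \<le> \<beta>" "\<beta> \<le> 1"
  shows "\<bar>real (min q (nat \<lfloor>\<beta> * real q\<rfloor> + 1) - nat \<lceil>\<alpha> * real q\<rceil>) - (\<beta> - \<alpha>) * real q\<bar> \<le> 1"
proof -
  define A where "A = \<alpha> * real q"
  define B where "B = \<beta> * real q"
  define lo where "lo = nat \<lceil>A\<rceil>"
  define hi where "hi = min q (nat \<lfloor>B\<rfloor> + 1)"
  have qr: "real q > 0" using q by simp
  have A0: "0 \<le> A" unfolding A_def using ab qr by simp
  have AB: "A \<le> B" unfolding A_def B_def using ab qr by (simp add: mult_right_mono)
  have Bq: "B \<le> real q" unfolding B_def using ab qr by (simp add: mult_le_cancel_right1)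
  have lo1: "A \<le> real lo" unfolding lo_def using A0 by linarith
  have lo2: "real lo < A + 1" unfolding lo_def using A0 by linarith
  have hi1: "B \<le> real hi" unfolding hi_def using Bq AB A0 by linarith
  have hi2: "real hi \<le> B + 1" unfolding hi_def using AB A0 by linarith
  have "real (hi - lo) \<le> B - A + 1"
  proof (cases "lo \<le> hi")
    case True then show ?thesis using lo1 hi2 by (simp add: of_nat_diff)
  next
    case False then show ?thesis using AB by simp
  qed
  moreover have "real (hi - lo) \<ge> B - A - 1"
  proof (cases "lo \<le> hi")
    case True then show ?thesis using lo2 hi1 by (simp add: of_nat_diff)
  next
    case False then have "real hi < real lo" by simp
    then show ?thesis using lo2 hi1 by simp
  qed
  moreover have "(\<beta> - \<alpha>) * real q = B - A" unfolding A_def B_def by (simp add: algebra_simps)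
  ultimately show ?thesis unfolding hi_def lo_def A_def B_def by linarith
qed

lemma orth:
  assumes q: "q > 0" and m0: "m0 < q" and J: "J \<subseteq> {..<q}" "finite J"
  shows "(\<Sum>k<q. (\<Sum>m\<in>J. ee q (- (int k * int m))) * ee q (int k * int m0)) =
         (if m0 \<in> J then of_nat q else 0)"
proof -
  have "(\<Sum>k<q. (\<Sum>m\<in>J. ee q (- (int k * int m))) * ee q (int k * int m0)) =
        (\<Sum>k<q. \<Sum>m\<in>J. ee q (int k * (int m0 - int m)))"
  proof (intro sum.cong refl)
    fix k :: nat
    have "(\<Sum>m\<in>J. ee q (- (int k * int m))) * ee q (int k * int m0) =
          (\<Sum>m\<in>J. ee q (- (int k * int m)) * ee q (int k * int m0))" by (rule sum_distrib_right)
    also have "\<dots> = (\<Sum>m\<in>J. ee q (int k * (int m0 - int m)))"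
    proof (intro sum.cong refl)
      fix m :: nat
      have "ee q (- (int k * int m)) * ee q (int k * int m0) = ee q (- (int k * int m) + int k * int m0)"
        by (simp only: ee_add)
      also have "- (int k * int m) + int k * int m0 = int k * (int m0 - int m)" by (simp add: algebra_simps)
      finally show "ee q (- (int k * int m)) * ee q (int k * int m0) = ee q (int k * (int m0 - int m))" .
    qed
    finally show "(\<Sum>m\<in>J. ee q (- (int k * int m))) * ee q (int k * int m0) =
          (\<Sum>m\<in>J. ee q (int k * (int m0 - int m)))" .
  qed
  also have "\<dots> = (\<Sum>m\<in>J. \<Sum>k<q. ee q (int k * (int m0 - int m)))"
    by (rule sum.swap)
  also have "\<dots> = (\<Sum>m\<in>J. if m = m0 then of_nat q else 0)"
  proof (intro sum.cong refl)
    fix m assume "m \<in> J"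
    then have mq: "m < q" using J by auto
    show "(\<Sum>k<q. ee q (int k * (int m0 - int m))) = (if m = m0 then of_nat q else 0)"
    proof (cases "m = m0")
      case True then show ?thesis by simp
    next
      case False
      have "\<not> int q dvd (int m0 - int m)"
      proof
        assume "int q dvd (int m0 - int m)"
        then have "\<bar>int q\<bar> \<le> \<bar>int m0 - int m\<bar>" using False by (intro dvd_imp_le_int) auto
        then show False using mq m0 by linarith
      qed
      then show ?thesis using False geo_zero[OF q] by simp
    qed
  qed
  also have "\<dots> = (if m0 \<in> J then of_nat q else 0)"
    using J by (simp add: sum.delta')
  finally show ?thesis .
qed

context pvsetup
begin

lemma Mset_eq: "Mset p g a r N = (\<lambda>j. real (t j) / real q) ` {1..N}"
  by (simp add: Mset_def t_def q_def)

lemma inj_tq: "inj_on (\<lambda>j. real (t j) / real q) {1..N}"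
proof (rule inj_onI)
  fix i j assume i: "i \<in> {1..N}" and j: "j \<in> {1..N}" and e: "real (t i) / real q = real (t j) / real q"
  then have "t i = t j" using q_pos by (simp add: divide_cancel_right)
  then show "i = j" by (rule inj_onD[OF t_inj _ i j])
qed

lemma card_M: "card (Mset p g a r N) = N"
  unfolding Mset_eq using inj_tq by (simp add: card_image)

lemma N_le_q: "N \<le> q"
proof -
  have "card {1..N} \<le> card {..<q}"
    by (rule card_inj_on_le[OF t_inj]) (auto simp: t_lt)
  then show ?thesis by simp
qed

lemma ln_p_ge1: "1 \<le> ln (real p)"
proof -
  have "exp 1 \<le> (3::real)" using e_less_272 by simp
  also have "3 \<le> real p" using p2 by simp
  finally show ?thesis using p_pos by (subst ln_ge_iff) auto
qed

lemma G_bound: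
  assumes k: "0 < k" "k < q"
  shows "norm (\<Sum>m\<in>{lo..<hi}. ee q (- (int k * int m))) \<le> 2 / norm (ee q (int k) - 1)"
proof -
  define w where "w = ee q (- int k)"
  have w1: "norm w = 1" unfolding w_def by simp
  have wn1: "w \<noteq> 1"
  proof
    assume "w = 1"
    then have "int q dvd - int k" unfolding w_def using ee_eq_1_iff[OF q_pos] by simp
    then have "q dvd k" by simp
    then show False using k by (auto dest: dvd_imp_le)
  qed
  have "(\<Sum>m\<in>{lo..<hi}. ee q (- (int k * int m))) = (\<Sum>m\<in>{lo..<hi}. w ^ m)"
    unfolding w_def by (intro sum.cong refl) (simp add: ee_power mult.commute[of "int k"])
  then have "norm (\<Sum>m\<in>{lo..<hi}. ee q (- (int k * int m))) \<le> 2 / norm (w - 1)"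
    using geo_ivl[OF w1 wn1] by simp
  also have "norm (w - 1) = norm (ee q (int k) - 1)"
  proof -
    have "w - 1 = cnj (ee q (int k) - 1)" unfolding w_def by (simp add: ee_neg)
    then show ?thesis by (simp only: complex_mod_cnj)
  qed
  finally show ?thesis .
qed

lemma disc_bound:
  assumes ab: "0 \<le> \<alpha>" "\<alpha> \<le> \<beta>" "\<beta> \<le> 1"
  shows "\<bar>disc (Mset p g a r N) \<alpha> \<beta>\<bar> \<le> 65 * sqrt (real p) * (ln (real p))^2"
proof -
  define lo where "lo = nat \<lceil>\<alpha> * real q\<rceil>"
  define hi where "hi = min q (nat \<lfloor>\<beta> * real q\<rfloor> + 1)"
  define J where "J = {lo..<hi}"
  define A where "A = {j\<in>{1..N}. t j \<in> J}"
  define G where "G k = (\<Sum>m\<in>J. ee q (- (int k * int m)))" for k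
  define B where "B = 4 * sqrt (real p) * (1 + ln (real p))"
  have Jq: "J \<subseteq> {..<q}" unfolding J_def hi_def by auto
  have b0: "0 \<le> \<beta>" using ab by simp
  have MI: "Mset p g a r N \<inter> {\<alpha>..\<beta>} = (\<lambda>j. real (t j) / real q) ` A"
  proof -
    have "j \<in> {1..N} \<Longrightarrow> (\<alpha> \<le> real (t j) / real q \<and> real (t j) / real q \<le> \<beta>) \<longleftrightarrow> t j \<in> J" for j
      unfolding J_def lo_def hi_def using ivl_mem[OF q_pos ab(1) b0 t_lt] by simp
    then show ?thesis unfolding Mset_eq A_def by auto
  qed
  have cardMI: "card (Mset p g a r N \<inter> {\<alpha>..\<beta>}) = card A"
    unfolding MI by (rule card_image) (rule inj_on_subset[OF inj_tq], auto simp: A_def)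
  have four: "(of_nat (card A) :: complex) = (1 / of_nat q) * (\<Sum>k<q. G k * S k)"
  proof -
    have "(of_nat (card A) :: complex) = (\<Sum>j\<in>{1..N}. if t j \<in> J then 1 else 0)"
      unfolding A_def by (simp add: sum.inter_filter[symmetric])
    also have "\<dots> = (\<Sum>j\<in>{1..N}. (1 / of_nat q) * (\<Sum>k<q. G k * ee q (int k * int (t j))))"
    proof (intro sum.cong refl)
      fix j assume j: "j \<in> {1..N}"
      have "(\<Sum>k<q. G k * ee q (int k * int (t j))) = (if t j \<in> J then of_nat q else 0)"
        unfolding G_def using orth[OF q_pos t_lt[OF j] Jq] by (simp add: J_def)
      then show "(if t j \<in> J then 1 else 0) = (1 / of_nat q) * (\<Sum>k<q. G k * ee q (int k * int (t j)))"
        using q_pos by simp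
    qed
    also have "\<dots> = (1 / of_nat q) * (\<Sum>j\<in>{1..N}. \<Sum>k<q. G k * ee q (int k * int (t j)))"
      by (simp only: sum_distrib_left)
    also have "\<dots> = (1 / of_nat q) * (\<Sum>k<q. \<Sum>j\<in>{1..N}. G k * ee q (int k * int (t j)))"
      by (subst sum.swap) (rule refl)
    also have "\<dots> = (1 / of_nat q) * (\<Sum>k<q. G k * S k)"
      unfolding S_def by (simp only: sum_distrib_left)
    finally show ?thesis .
  qed
  have split: "(\<Sum>k<q. G k * S k) = G 0 * S 0 + (\<Sum>k\<in>{1..<q}. G k * S k)"
    using q_pos by (simp add: atLeast0LessThan[symmetric] sum.atLeast_Suc_lessThan)
  have G0: "G 0 = of_nat (hi - lo)" unfolding G_def J_def by simp
  have S0: "S 0 = of_nat N" unfolding S_def by simp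
  define E where "E = (1 / of_nat q) * (\<Sum>k\<in>{1..<q}. G k * S k)"
  have Eeq: "(of_nat (card A) :: complex) = of_real (real (hi - lo) * real N / real q) + E"
    unfolding four split E_def G0 S0 by (simp add: distrib_left)
  have Eb: "norm E \<le> 4 * (1 + ln (real q)) * B"
  proof -
    have "norm (\<Sum>k\<in>{1..<q}. G k * S k) \<le> (\<Sum>k\<in>{1..<q}. (2 / norm (ee q (int k) - 1)) * B)"
    proof (rule order.trans[OF norm_sum sum_mono])
      fix k assume "k \<in> {1..<q}"
      then have k: "0 < k" "k < q" by auto
      have "norm (G k * S k) = norm (G k) * norm (S k)" by (simp add: norm_mult)
      also have "\<dots> \<le> (2 / norm (ee q (int k) - 1)) * B"
        unfolding G_def J_def B_def
        by (intro mult_mono G_bound PV k) auto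
      finally show "norm (G k * S k) \<le> (2 / norm (ee q (int k) - 1)) * B" .
    qed
    also have "\<dots> = (\<Sum>k\<in>{1..<q}. 2 / norm (ee q (int k) - 1)) * B" by (simp add: sum_distrib_right)
    also have "\<dots> \<le> (4 * real q * (1 + ln (real q))) * B"
      using sum_inv_bound[OF q_ge2] ln_p_ge1 by (intro mult_right_mono) (auto simp: B_def)
    finally have "norm (\<Sum>k\<in>{1..<q}. G k * S k) \<le> 4 * real q * (1 + ln (real q)) * B" .
    then show ?thesis unfolding E_def using q_pos by (simp add: norm_divide field_simps)
  qed
  have d1: "\<bar>real (card A) - real (hi - lo) * real N / real q\<bar> = norm E"
  proof -
    have "of_real (real (card A) - real (hi - lo) * real N / real q) = E"
      using Eeq by simp
    then show ?thesis by (metis norm_of_real)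
  qed
  have d2: "\<bar>real (hi - lo) * real N / real q - (\<beta> - \<alpha>) * real N\<bar> \<le> 1"
  proof -
    have "real (hi - lo) * real N / real q - (\<beta> - \<alpha>) * real N
        = (real N / real q) * (real (hi - lo) - (\<beta> - \<alpha>) * real q)"
      using q_pos by (simp add: field_simps)
    then have "\<bar>real (hi - lo) * real N / real q - (\<beta> - \<alpha>) * real N\<bar>
        = (real N / real q) * \<bar>real (hi - lo) - (\<beta> - \<alpha>) * real q\<bar>"
      by (simp add: abs_mult)
    also have "\<dots> \<le> (real N / real q) * 1"
      using ivl_card[OF q_pos ab] unfolding hi_def lo_def by (intro mult_left_mono) auto
    also have "\<dots> \<le> 1" using N_le_q q_pos by simp
    finally show ?thesis .
  qed
  have discA: "disc (Mset p g a r N) \<alpha> \<beta> = real (card A) - (\<beta> - \<alpha>) * real N"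
    unfolding disc_def cardMI card_M ..
  have D: "\<bar>disc (Mset p g a r N) \<alpha> \<beta>\<bar> \<le> norm E + 1"
    unfolding discA using d1 d2 by linarith
  have E64: "norm E \<le> 64 * sqrt (real p) * (ln (real p))^2"
  proof -
    have L: "1 \<le> ln (real p)" by (rule ln_p_ge1)
    have lq: "ln (real q) \<le> ln (real p)" using q_pos by (simp add: q_def)
    have h12: "1 + ln (real q) \<le> 2 * ln (real p)" using L lq by linarith
    have "4 * (1 + ln (real q)) \<le> 4 * (2 * ln (real p))" using h12 by (rule mult_left_mono) simp
    then have m1: "4 * (1 + ln (real q)) \<le> 8 * ln (real p)" by simp
    have m2: "B \<le> 8 * sqrt (real p) * ln (real p)"
    proof -
      have h: "1 + ln (real p) \<le> 2 * ln (real p)" using L by linarith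
      have "4 * sqrt (real p) * (1 + ln (real p)) \<le> 4 * sqrt (real p) * (2 * ln (real p))"
        using h by (rule mult_left_mono) simp
      then show ?thesis unfolding B_def by simp
    qed
    have m3: "B \<ge> 0" unfolding B_def using L by simp
    have m4: "0 \<le> 8 * ln (real p)" using L by simp
    have "4 * (1 + ln (real q)) * B \<le> (8 * ln (real p)) * (8 * sqrt (real p) * ln (real p))"
      by (rule mult_mono[OF m1 m2 m4 m3])
    also have "\<dots> = 64 * sqrt (real p) * (ln (real p))^2" by (simp add: power2_eq_square)
    finally show ?thesis using Eb by linarith
  qed
  have one: "64 * sqrt (real p) * (ln (real p))^2 + 1 \<le> 65 * sqrt (real p) * (ln (real p))^2"
  proof -
    have h1: "1 \<le> sqrt (real p)" using p_pos by simp
    have h2: "1 \<le> (ln (real p))^2" using ln_p_ge1 by (simp add: one_le_power)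
    have "1 * 1 \<le> sqrt (real p) * (ln (real p))^2" by (rule mult_mono[OF h1 h2]) auto
    then have "1 \<le> sqrt (real p) * (ln (real p))^2" by simp
    then show ?thesis by simp
  qed
  show ?thesis using D E64 one by linarith
qed

lemma disc_trivial:
  assumes ab: "0 \<le> \<alpha>" "\<alpha> \<le> \<beta>" "\<beta> \<le> 1"
  shows "\<bar>disc (Mset p g a r N) \<alpha> \<beta>\<bar> \<le> (\<beta> - \<alpha>) * real q + 1"
proof -
  define lo where "lo = nat \<lceil>\<alpha> * real q\<rceil>"
  define hi where "hi = min q (nat \<lfloor>\<beta> * real q\<rfloor> + 1)"
  define J where "J = {lo..<hi}"
  define A where "A = {j\<in>{1..N}. t j \<in> J}"
  have b0: "0 \<le> \<beta>" using ab by simp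
  have MI: "Mset p g a r N \<inter> {\<alpha>..\<beta>} = (\<lambda>j. real (t j) / real q) ` A"
  proof -
    have "j \<in> {1..N} \<Longrightarrow> (\<alpha> \<le> real (t j) / real q \<and> real (t j) / real q \<le> \<beta>) \<longleftrightarrow> t j \<in> J" for j
      unfolding J_def lo_def hi_def using ivl_mem[OF q_pos ab(1) b0 t_lt] by simp
    then show ?thesis unfolding Mset_eq A_def by auto
  qed
  have cardMI: "card (Mset p g a r N \<inter> {\<alpha>..\<beta>}) = card A"
    unfolding MI by (rule card_image) (rule inj_on_subset[OF inj_tq], auto simp: A_def)
  have "card A \<le> card J"
    by (rule card_inj_on_le[OF inj_on_subset[OF t_inj]]) (auto simp: A_def J_def)
  then have cA: "real (card A) \<le> real (hi - lo)" by (simp add: J_def)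
  have "real (hi - lo) \<le> (\<beta> - \<alpha>) * real q + 1"
    using ivl_card[OF q_pos ab] unfolding hi_def lo_def by linarith
  moreover have "(\<beta> - \<alpha>) * real N \<le> (\<beta> - \<alpha>) * real q"
    using N_le_q ab by (intro mult_left_mono) auto
  moreover have "0 \<le> (\<beta> - \<alpha>) * real N" using ab by simp
  ultimately show ?thesis unfolding disc_def cardMI card_M using cA by linarith
qed

end


lemma ln_pi_le: "ln pi \<le> 16 / 10"
proof -
  have "pi \<le> (178 / 100) ^ 2" using pi_approx by (simp add: power2_eq_square)
  then have "sqrt pi \<le> sqrt ((178 / 100) ^ 2)" by (rule real_sqrt_le_mono)
  then have s: "sqrt pi \<le> 178 / 100" by simp
  have "ln (sqrt pi) \<le> sqrt pi - 1" using pi_gt_zero by (intro ln_le_minus_one) simp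
  moreover have "ln (sqrt pi) = ln pi / 2" using pi_gt_zero by (simp add: ln_sqrt)
  ultimately show ?thesis using s by linarith
qed

theorem theorem1:
  "\<exists>c1 c2 :: real. c1 > 0 \<and> c2 > 0 \<and>
     (\<forall>(p::nat) (g::nat) (a::nat) (r::nat) (N::nat).
        prime p \<and> p > 2 \<and> residue_primroot p g \<and> r > 0 \<and> N > 0 \<and>
        (\<forall>j\<in>{1..N}. a + j * r \<in> {1..p - 1}) \<longrightarrow>
          (\<forall>\<alpha> \<beta> :: real. 0 \<le> \<alpha> \<and> \<alpha> \<le> \<beta> \<and> \<beta> \<le> 1 \<and> 1 / pi < real p * (\<beta> - \<alpha>) \<longrightarrow>
             \<bar>disc (Mset p g a r N) \<alpha> \<beta>\<bar>
               \<le> c1 * sqrt (real p) * ln (real p) * (2 + ln (real p * (\<beta> - \<alpha>)))) \<and>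
          \<bar>ext_disc (Mset p g a r N)\<bar>
            \<le> c2 / real (card (Mset p g a r N)) * sqrt (real p) * (ln (real p))^2)"
proof (rule exI[of _ 130], rule exI[of _ 65], intro conjI allI impI)
  fix p g a r N :: nat
  assume H: "prime p \<and> p > 2 \<and> residue_primroot p g \<and> r > 0 \<and> N > 0 \<and>
        (\<forall>j\<in>{1..N}. a + j * r \<in> {1..p - 1})"
  interpret pvsetup p g a r N
    using H by unfold_locales auto
  define K where "K = 65 * sqrt (real p) * (ln (real p))^2"
  have L1: "1 \<le> ln (real p)" by (rule ln_p_ge1)
  have sp: "1 \<le> sqrt (real p)" using p_pos by simp
  show "\<bar>disc (Mset p g a r N) \<alpha> \<beta>\<bar>
               \<le> 130 * sqrt (real p) * ln (real p) * (2 + ln (real p * (\<beta> - \<alpha>)))"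
    if ab: "0 \<le> \<alpha> \<and> \<alpha> \<le> \<beta> \<and> \<beta> \<le> 1 \<and> 1 / pi < real p * (\<beta> - \<alpha>)" for \<alpha> \<beta> :: real
  proof -
    define L where "L = real p * (\<beta> - \<alpha>)"
    have Lgt: "1 / pi < L" using ab unfolding L_def by simp
    have "0 < 1 / pi" by simp
    then have Lpos: "0 < L" using Lgt by linarith
    have lnL: "- (16/10) \<le> ln L"
    proof -
      have "ln (1 / pi) < ln L" using Lgt Lpos pi_gt_zero by simp
      moreover have "ln (1 / pi) = - ln pi" using pi_gt_zero by (simp add: ln_div)
      ultimately show ?thesis using ln_pi_le by linarith
    qed
    have X0: "0 \<le> sqrt (real p) * ln (real p)" using L1 sp by simp
    have "\<bar>disc (Mset p g a r N) \<alpha> \<beta>\<bar> \<le> 130 * sqrt (real p) * ln (real p) * (2 + ln L)"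
    proof (cases "sqrt (real p) \<le> L")
      case True
      have "ln (sqrt (real p)) \<le> ln L" using True p_pos Lpos by (subst ln_le_cancel_iff) auto
      then have "ln (real p) \<le> 2 * (2 + ln L)" using p_pos by (simp add: ln_sqrt)
      then have "(sqrt (real p) * ln (real p)) * ln (real p) \<le> (sqrt (real p) * ln (real p)) * (2 * (2 + ln L))"
        using X0 by (rule mult_left_mono)
      moreover have "\<bar>disc (Mset p g a r N) \<alpha> \<beta>\<bar> \<le> 65 * ((sqrt (real p) * ln (real p)) * ln (real p))"
        using disc_bound ab by (simp add: power2_eq_square mult.assoc)
      moreover have "130 * sqrt (real p) * ln (real p) * (2 + ln L) = 65 * ((sqrt (real p) * ln (real p)) * (2 * (2 + ln L)))"
        by (simp add: algebra_simps)
      ultimately show ?thesis by linarith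
    next
      case False
      have "\<bar>disc (Mset p g a r N) \<alpha> \<beta>\<bar> \<le> (\<beta> - \<alpha>) * real q + 1"
        using disc_trivial ab by simp
      also have "(\<beta> - \<alpha>) * real q \<le> L"
      proof -
        have "(\<beta> - \<alpha>) * real q \<le> (\<beta> - \<alpha>) * real p" using ab by (intro mult_left_mono) (auto simp: q_def)
        then show ?thesis unfolding L_def by (simp add: mult.commute)
      qed
      finally have d: "\<bar>disc (Mset p g a r N) \<alpha> \<beta>\<bar> \<le> 2 * sqrt (real p)" using False sp by linarith
      have "sqrt (real p) * 1 * (4/10) \<le> sqrt (real p) * ln (real p) * (2 + ln L)"
        using L1 lnL sp by (intro mult_mono) auto
      then show ?thesis using d sp by linarith
    qed
    then show ?thesis by (simp only: L_def)
  qed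
  have bnd: "\<And>ab. ab \<in> {(\<alpha>, \<beta>). 0 \<le> \<alpha> \<and> \<alpha> \<le> \<beta> \<and> \<beta> \<le> 1} \<Longrightarrow>
      \<bar>disc (Mset p g a r N) (fst ab) (snd ab)\<bar> \<le> K"
    unfolding K_def using disc_bound by auto
  have ne: "{(\<alpha>, \<beta>). 0 \<le> \<alpha> \<and> \<alpha> \<le> \<beta> \<and> (\<beta>::real) \<le> 1} \<noteq> {}"
  proof -
    have "(0::real, 0::real) \<in> {(\<alpha>, \<beta>). 0 \<le> \<alpha> \<and> \<alpha> \<le> \<beta> \<and> (\<beta>::real) \<le> 1}" by simp
    then show ?thesis by blast
  qed
  have sup_le: "(SUP ab \<in> {(\<alpha>, \<beta>). 0 \<le> \<alpha> \<and> \<alpha> \<le> \<beta> \<and> \<beta> \<le> 1}. \<bar>disc (Mset p g a r N) (fst ab) (snd ab)\<bar>) \<le> K"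
    using ne bnd by (rule cSUP_least)
  have sup_ge: "0 \<le> (SUP ab \<in> {(\<alpha>, \<beta>). 0 \<le> \<alpha> \<and> \<alpha> \<le> \<beta> \<and> \<beta> \<le> 1}. \<bar>disc (Mset p g a r N) (fst ab) (snd ab)\<bar>)"
  proof -
    have "bdd_above ((\<lambda>ab. \<bar>disc (Mset p g a r N) (fst ab) (snd ab)\<bar>) ` {(\<alpha>, \<beta>). 0 \<le> \<alpha> \<and> \<alpha> \<le> \<beta> \<and> (\<beta>::real) \<le> 1})"
      using bnd by (intro bdd_aboveI2) 
    note bdd = this
    have "\<bar>disc (Mset p g a r N) (fst (0,0)) (snd (0,0))\<bar> \<le> (SUP ab \<in> {(\<alpha>, \<beta>). 0 \<le> \<alpha> \<and> \<alpha> \<le> \<beta> \<and> \<beta> \<le> 1}. \<bar>disc (Mset p g a r N) (fst ab) (snd ab)\<bar>)"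
      using cSUP_upper[OF _ bdd, of "(0::real,0::real)"] by simp
    then show ?thesis by linarith
  qed
  have Npos': "real N > 0" using H by simp
  show "\<bar>ext_disc (Mset p g a r N)\<bar> \<le> 65 / real (card (Mset p g a r N)) * sqrt (real p) * (ln (real p))^2"
    unfolding ext_disc_def card_M
    using sup_le sup_ge Npos' unfolding K_def
    by (simp add: abs_mult divide_right_mono)
qed simp_all


end
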